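(* Let $L$, $\rho$ and the notions below be as in the context, let $\lambda_9\in\Lambda$ be a vector of norm $9$, and let $s=(\lambda_9;\theta,-1)$. Let $p$ be the point of $s^\perp$ nearest $\rho$, and let $B=\{x\in\mathbb{C}H^{13}:\mathrm{ht}_\rho(x)<\mathrm{ht}_\rho(p)\}$ be the open horoball centered at $\rho$ whose bounding horosphere is tangent to $s^\perp$ at $p$. Then there exist an open ball $U$ around $p$ with $U\cap\mathcal{H}=U\cap\mathcal{H}_p$, and a triflection $R$ in a Leech root, such that $B\cap R(B)\cap U\neq\emptyset$ and $R(B)\cap U\cap s^\perp\neq\emptyset$.
   Context: Let $\omega$ be a primitive cube root of unity, $\mathcal{E}=\mathbb{Z}[\omega]$, $\theta=\omega-\bar\omega=\sqrt{-3}$. Hermitian forms are linear in the first argument and antilinear in the second; $v^2=\langle v,v\rangle$. $\Lambda$ is the complex Leech lattice, an $\mathcal{E}$-lattice of rank 12 whose underlying real lattice is a scaled Leech lattice, scaled to have minimal norm $6$ (all inner products in $\theta\mathcal{E}$, $\Lambda=\theta\Lambda^*$). $L=\Lambda\oplus\mathcal{E}^2$, vectors $(x;y,z)$ with $x\in\Lambda$, $y,z\in\mathcal{E}$, and $\langle(x;y,z),(x';y',z')\rangle=\langle x,x'\rangle_\Lambda+\bar\theta y\bar z'+\theta z\bar y'$; signature $(13,1)$; $\mathbb{C}H^{13}$ is the set of negative-definite lines in $L\otimes_{\mathcal{E}}\mathbb{C}$ with its complex hyperbolic metric. A root is a vector of $L$ of norm $3$; $s^\perp$ is the corresponding hyperplane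 in $\mathbb{C}H^{13}$; $\mathcal{H}$ is the union of all such hyperplanes and $\mathcal{H}_p$ the union of those containing $p$. $\rho=(0;0,1)$. For $x\in\mathbb{C}H^{13}$ represented by $w$, $\mathrm{ht}_\rho(x)=-|\langle \rho,w\rangle|^2/w^2$. A Leech root is a root $l$ with $|\langle\rho,l\rangle|^2=3$. A triflection in a root $l$ is a map $x\mapsto x-(1-\zeta)\frac{\langle x,l\rangle}{3}l$ with $\zeta\in\{\omega,\bar\omega\}$. The point of $s^\perp$ nearest $\rho$ is the point represented by $\rho-\tfrac13\langle\rho,s\rangle s$ (the point of $s^\perp$ minimizing $\mathrm{ht}_\rho$). *)

theory Defs
  imports "HOL-Analysis.Analysis"
begin

definition omega :: complex where
  "omega = Complex (-1/2) (sqrt 3 / 2)"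

definition theta :: complex where
  "theta = omega - cnj omega"

definition Eis :: "complex set" where
  "Eis = {of_int a + of_int b * omega | a b. True}"

type_synonym cvec12 = "complex ^ 12"

definition hf12 :: "cvec12 \<Rightarrow> cvec12 \<Rightarrow> complex" where
  "hf12 x y = (\<Sum>i\<in>UNIV. x $ i * cnj (y $ i))"

definition E_lattice12 :: "cvec12 set \<Rightarrow> bool" where
  "E_lattice12 M \<longleftrightarrow> (\<exists>b :: 12 \<Rightarrow> cvec12.
      (\<forall>c :: 12 \<Rightarrow> complex. (\<Sum>i\<in>UNIV. c i *s b i) = 0 \<longrightarrow> (\<forall>i. c i = 0)) \<and>
      M = {(\<Sum>i\<in>UNIV. c i *s b i) | c. \<forall>i. c i \<in> Eis})"

definition dual12 :: "cvec12 set \<Rightarrow> cvec12 set" where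
  "dual12 M = {y. \<forall>x\<in>M. hf12 x y \<in> Eis}"

definition complex_leech :: "cvec12 set \<Rightarrow> bool" where
  "complex_leech M \<longleftrightarrow>
     E_lattice12 M \<and>
     (\<forall>x\<in>M. \<forall>y\<in>M. hf12 x y \<in> {theta * e | e. e \<in> Eis}) \<and>
     M = {theta *s y | y. y \<in> dual12 M} \<and>
     (\<forall>x\<in>M. x \<noteq> 0 \<longrightarrow> Re (hf12 x x) \<ge> 6) \<and>
     (\<exists>x\<in>M. hf12 x x = 6)"

section \<open>L = Lambda + E^2 and its Hermitian form of signature (13,1)\<close>

type_synonym vec = "cvec12 \<times> complex \<times> complex"

fun hform :: "vec \<Rightarrow> vec \<Rightarrow> complex" where
  "hform (x, y, z) (x', y', z') = hf12 x x' + cnj theta * y * cnj z' + theta * z * cnj y'"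

fun vscale :: "complex \<Rightarrow> vec \<Rightarrow> vec" where
  "vscale c (x, y, z) = (c *s x, c * y, c * z)"

fun vsub :: "vec \<Rightarrow> vec \<Rightarrow> vec" where
  "vsub (x, y, z) (x', y', z') = (x - x', y - y', z - z')"

definition Lat :: "cvec12 set \<Rightarrow> vec set" where
  "Lat M = {(x, y, z) | x y z. x \<in> M \<and> y \<in> Eis \<and> z \<in> Eis}"

definition rho :: vec where
  "rho = (0, 0, 1)"

text \<open>Points of complex hyperbolic space CH^13 are represented by negative-norm vectors;
  all point sets below are invariant under nonzero complex scaling.\<close>
definition negv :: "vec \<Rightarrow> bool" where
  "negv w \<longleftrightarrow> Re (hform w w) < 0"

definition roots :: "cvec12 set \<Rightarrow> vec set" where
  "roots M = {r \<in> Lat M. hform r r = 3}"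

definition mirror :: "vec \<Rightarrow> vec set" where
  "mirror s = {w. negv w \<and> hform w s = 0}"

definition Hall :: "cvec12 set \<Rightarrow> vec set" where
  "Hall M = (\<Union>r\<in>roots M. mirror r)"

definition Hat :: "cvec12 set \<Rightarrow> vec \<Rightarrow> vec set" where
  "Hat M p = (\<Union>r\<in>{r \<in> roots M. p \<in> mirror r}. mirror r)"

definition ht :: "vec \<Rightarrow> real" where
  "ht w = - (cmod (hform rho w))\<^sup>2 / Re (hform w w)"

text \<open>Complex hyperbolic distance (curvature normalised to -1).\<close>
definition chdist :: "vec \<Rightarrow> vec \<Rightarrow> real" where
  "chdist v w = 2 * arcosh (sqrt ((cmod (hform v w))\<^sup>2 / (Re (hform v v) * Re (hform w w))))"

definition chball :: "vec \<Rightarrow> real \<Rightarrow> vec set" where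
  "chball p r = {w. negv w \<and> chdist w p < r}"

definition leech_root :: "cvec12 set \<Rightarrow> vec \<Rightarrow> bool" where
  "leech_root M l \<longleftrightarrow> l \<in> roots M \<and> (cmod (hform rho l))\<^sup>2 = 3"

definition triflection :: "complex \<Rightarrow> vec \<Rightarrow> vec \<Rightarrow> vec" where
  "triflection \<zeta> l x = vsub x (vscale ((1 - \<zeta>) * hform x l / 3) l)"

end

theory Submission
  imports Defs
begin

lemma sqrt3_sq: "sqrt 3 * sqrt 3 = (3::real)" by simp

lemma omega_eq: "omega = Complex (-1/2) (sqrt 3/2)" by (simp add: omega_def)
lemma theta_eq: "theta = Complex 0 (sqrt 3)"
  by (simp add: theta_def omega_def complex_eq_iff)
lemma cnj_theta: "cnj theta = - theta" by (simp add: theta_eq complex_eq_iff)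
lemma theta_sq: "theta * theta = -3" by (simp add: theta_eq complex_eq_iff)
lemma cnj_theta_theta: "cnj theta * theta = 3" by (simp add: theta_eq complex_eq_iff)
lemma theta_cnj_theta: "theta * cnj theta = 3" by (simp add: theta_eq complex_eq_iff)
lemma theta_omega: "theta = 2 * omega + 1" by (simp add: theta_eq omega_eq complex_eq_iff)
lemma cnj_omega: "cnj omega = -1 - omega" by (simp add: omega_eq complex_eq_iff)
lemma omega_sq: "omega * omega = -1 - omega" by (simp add: omega_eq complex_eq_iff)
lemma cmod_theta_sq: "(cmod theta)^2 = 3" by (simp add: theta_eq cmod_def)

lemma hf12_scale_left: "hf12 (c *s x) y = c * hf12 x y"
  unfolding hf12_def by (simp add: sum_distrib_left mult.assoc)
lemma hf12_scale_right: "hf12 x (c *s y) = cnj c * hf12 x y"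
  unfolding hf12_def by (simp add: sum_distrib_left algebra_simps)
lemma hf12_diff_left: "hf12 (x - y) z = hf12 x z - hf12 y z"
  unfolding hf12_def by (simp add: sum_subtractf algebra_simps)
lemma hf12_diff_right: "hf12 x (y - z) = hf12 x y - hf12 x z"
  unfolding hf12_def by (simp add: sum_subtractf algebra_simps)
lemma hf12_zero_left: "hf12 0 y = 0" unfolding hf12_def by simp
lemma hf12_zero_right: "hf12 x 0 = 0" unfolding hf12_def by simp
lemma hf12_minus_left: "hf12 (- x) y = - hf12 x y"
  unfolding hf12_def by (simp add: sum_negf)
lemma hf12_minus_right: "hf12 x (- y) = - hf12 x y"
  unfolding hf12_def by (simp add: sum_negf)
lemma hf12_cnj: "hf12 y x = cnj (hf12 x y)"
  unfolding hf12_def by (simp add: mult.commute)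
lemma hf12_self: "hf12 x x = complex_of_real (\<Sum>i\<in>UNIV. (cmod (x $ i))^2)"
  unfolding hf12_def of_real_sum by (intro sum.cong refl) (simp only: complex_norm_square)

lemma hf12_self_Re: "Re (hf12 x x) \<ge> 0"
  by (simp add: hf12_self sum_nonneg)
lemma hf12_self_Im: "Im (hf12 x x) = 0"
  by (simp add: hf12_self)

lemmas hf12_simps = hf12_scale_left hf12_scale_right hf12_diff_left hf12_diff_right
  hf12_zero_left hf12_zero_right hf12_minus_left hf12_minus_right

lemma hform_cnj0: "hform (x', y', z') (x, y, z) = cnj (hform (x, y, z) (x', y', z'))"
proof -
  have "hf12 x' x = cnj (hf12 x x')" by (rule hf12_cnj)
  then show ?thesis by (simp add: cnj_theta ring_distribs mult.commute mult.left_commute)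
qed
lemma hform_cnj: "hform v u = cnj (hform u v)"
proof -
  obtain x y z where u: "u = (x, y, z)" by (cases u)
  obtain x' y' z' where v: "v = (x', y', z')" by (cases v)
  show ?thesis unfolding u v by (rule hform_cnj0)
qed

lemma hform_sub_left: "hform (vsub u v) w = hform u w - hform v w"
  by (cases u; cases v; cases w) (simp add: hf12_simps algebra_simps)
lemma hform_sub_right: "hform w (vsub u v) = hform w u - hform w v"
  by (cases u; cases v; cases w) (simp add: hf12_simps algebra_simps)
lemma hform_scale_left: "hform (vscale c u) w = c * hform u w"
  by (cases u; cases w) (simp add: hf12_simps algebra_simps)
lemma hform_scale_right: "hform w (vscale c u) = cnj c * hform w u"
  by (cases u; cases w) (simp add: hf12_simps algebra_simps)

lemmas hform_lin = hform_sub_left hform_sub_right hform_scale_left hform_scale_right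

lemma hform_self_real: "hform u u = complex_of_real (Re (hform u u))"
proof -
  have "hform u u = cnj (hform u u)" by (rule hform_cnj)
  then show ?thesis by (metis Reals_cnj_iff complex_is_Real_iff of_real_Re)
qed

lemma re_cross: "Re (a * cnj z + cnj a * z) = (cmod (a + z))^2/2 - (cmod (a - z))^2/2"
  unfolding cmod_power2 by (simp add: power2_eq_square field_simps)

fun ff :: "vec \<Rightarrow> complex" where "ff (x, y, z) = cnj theta * y - z"
fun PP :: "vec \<Rightarrow> real" where "PP (x, y, z) = Re (hf12 x x) + (cmod (cnj theta * y + z))^2/2"

lemma PP_nonneg: "PP v \<ge> 0"
  by (cases v) (simp add: hf12_self_Re)

lemma hform_decomp: "Re (hform v v) = PP v - (cmod (ff v))^2/2"
proof (cases v)
  case (fields x y z)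
  have "theta * z * cnj y = cnj (cnj theta * y) * z" by simp
  then have "Re (hform v v) = Re (hf12 x x) + Re ((cnj theta * y) * cnj z + cnj (cnj theta * y) * z)"
    using fields by (simp add: algebra_simps)
  also have "\<dots> = PP v - (cmod (ff v))^2/2"
    unfolding re_cross using fields by simp
  finally show ?thesis .
qed

lemma ff_lin: "ff (vsub (vscale a u) (vscale b w)) = a * ff u - b * ff w"
  by (cases u; cases w) (simp add: algebra_simps)

lemma Re_mult_cnj_self: "Re (a * cnj a * z) = (cmod a)^2 * Re z"
  unfolding cmod_power2 by (simp add: power2_eq_square algebra_simps)

lemma orth_nonneg:
  assumes neg: "Re (hform w w) < 0" and orth: "hform u w = 0"
  shows "Re (hform u u) \<ge> 0"
proof (rule ccontr)
  assume "\<not> Re (hform u u) \<ge> 0"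
  then have un: "Re (hform u u) < 0" by simp
  have fw: "ff w \<noteq> 0"
  proof
    assume "ff w = 0"
    then have "Re (hform w w) = PP w" using hform_decomp[of w] by simp
    with PP_nonneg[of w] neg show False by simp
  qed
  define v where "v = vsub (vscale (ff w) u) (vscale (ff u) w)"
  have "ff v = 0" unfolding v_def ff_lin by simp
  then have v1: "Re (hform v v) \<ge> 0" using hform_decomp[of v] PP_nonneg[of v] by simp
  have orth2: "hform w u = 0" using hform_cnj[of w u] orth by simp
  have "hform v v = ff w * cnj (ff w) * hform u u + ff u * cnj (ff u) * hform w w"
    unfolding v_def hform_lin orth orth2 by (simp add: algebra_simps)
  then have "Re (hform v v) = (cmod (ff w))^2 * Re (hform u u) + (cmod (ff u))^2 * Re (hform w w)"
    by (simp only: Re_mult_cnj_self plus_complex.sel)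
  moreover have "(cmod (ff w))^2 * Re (hform u u) < 0"
    using fw un by (simp add: mult_pos_neg)
  moreover have "(cmod (ff u))^2 * Re (hform w w) \<le> 0"
    using neg by (simp add: mult_nonneg_nonpos)
  ultimately show False using v1 by linarith
qed

lemma mirror_far:
  assumes neg: "Re (hform w w) < 0" and wr: "hform w r = 0" and rr: "hform r r = 3"
    and pvec: "hform p p = -3"
  shows "3 * (cmod (hform p w))^2 \<ge> - Re (hform w w) * (9 + (cmod (hform p r))^2)"
proof -
  define N where "N = Re (hform w w)"
  define P where "P = hform p w"
  define R where "R = hform p r"
  have hww: "hform w w = of_real N" unfolding N_def by (rule hform_self_real)
  have hwp: "hform w p = cnj P" unfolding P_def by (rule hform_cnj)
  have rw: "hform r w = 0" using hform_cnj[of r w] wr by simp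
  define q where "q = vsub (vscale (of_real N) p) (vscale P w)"
  have qw: "hform q w = 0" unfolding q_def hform_lin hww P_def by simp
  have qr: "hform q r = of_real N * R" unfolding q_def hform_lin wr R_def by simp
  have rq: "hform r q = cnj (of_real N * R)" using hform_cnj[of r q] qr by simp
  have qq: "hform q q = of_real (N*N*(-3) - N*(cmod P)^2)"
    unfolding q_def hform_lin hww pvec hwp P_def[symmetric] cmod_power2
    by (simp add: complex_eq_iff power2_eq_square algebra_simps)
  define u where "u = vsub (vscale 3 q) (vscale (hform q r) r)"
  have uw: "hform u w = 0" unfolding u_def hform_lin qw rw by simp
  have u0: "Re (hform u u) \<ge> 0" by (rule orth_nonneg[OF neg uw])
  have uu: "hform u u = of_real (9*(N*N*(-3) - N*(cmod P)^2) - 3*N*N*(cmod R)^2)"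
    unfolding u_def hform_lin qq qr rq rr cmod_power2
    by (simp add: complex_eq_iff power2_eq_square algebra_simps)
  have N0: "N < 0" using neg N_def by simp
  have "0 \<le> 9*(N*N*(-3) - N*(cmod P)^2) - 3*N*N*(cmod R)^2" using u0 uu by simp
  then have "0 \<le> (-3*N) * (3*(cmod P)^2 + N*(9 + (cmod R)^2))"
    by (simp add: algebra_simps)
  moreover have "-3*N > 0" using N0 by simp
  ultimately have "0 \<le> 3*(cmod P)^2 + N*(9 + (cmod R)^2)"
    by (meson zero_le_mult_iff not_le)
  then show ?thesis unfolding N_def[symmetric] P_def[symmetric] R_def[symmetric] by simp
qed

lemma Eis_iff: "z \<in> Eis \<longleftrightarrow> (\<exists>a b::int. z = of_int a + of_int b * omega)"
  by (auto simp: Eis_def)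

lemma Eis_add: "x \<in> Eis \<Longrightarrow> y \<in> Eis \<Longrightarrow> x + y \<in> Eis"
proof -
  assume "x \<in> Eis" "y \<in> Eis"
  then obtain a b c d :: int where x: "x = of_int a + of_int b * omega"
    and y: "y = of_int c + of_int d * omega" unfolding Eis_iff by blast
  have "x + y = of_int (a + c) + of_int (b + d) * omega"
    unfolding x y by (simp add: algebra_simps)
  then show ?thesis unfolding Eis_iff by blast
qed

lemma Eis_minus: "x \<in> Eis \<Longrightarrow> - x \<in> Eis"
proof -
  assume "x \<in> Eis"
  then obtain a b :: int where x: "x = of_int a + of_int b * omega" unfolding Eis_iff by blast
  have "- x = of_int (- a) + of_int (- b) * omega" unfolding x by simp
  then show ?thesis unfolding Eis_iff by blast
qed

lemma Eis_diff: "x \<in> Eis \<Longrightarrow> y \<in> Eis \<Longrightarrow> x - y \<in> Eis"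
  using Eis_add[of x "- y"] Eis_minus[of y] by simp

lemma Eis_of_int: "of_int k \<in> Eis"
  unfolding Eis_iff by (rule exI[of _ k], rule exI[of _ 0]) simp

lemma Eis_omega: "omega \<in> Eis"
  unfolding Eis_iff by (rule exI[of _ 0], rule exI[of _ 1]) simp

lemma Eis_mult: "x \<in> Eis \<Longrightarrow> y \<in> Eis \<Longrightarrow> x * y \<in> Eis"
proof -
  assume "x \<in> Eis" "y \<in> Eis"
  then obtain a b c d :: int where x: "x = of_int a + of_int b * omega"
    and y: "y = of_int c + of_int d * omega" unfolding Eis_iff by blast
  have "x * y = of_int (a*c - b*d) + of_int (a*d + b*c - b*d) * omega"
    unfolding x y by (simp add: omega_eq complex_eq_iff algebra_simps)
  then show ?thesis unfolding Eis_iff by blast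
qed

lemma Eis_cnj: "x \<in> Eis \<Longrightarrow> cnj x \<in> Eis"
proof -
  assume "x \<in> Eis"
  then obtain a b :: int where x: "x = of_int a + of_int b * omega" unfolding Eis_iff by blast
  have "cnj x = of_int (a - b) + of_int (- b) * omega"
    unfolding x by (simp add: omega_eq complex_eq_iff)
  then show ?thesis unfolding Eis_iff by blast
qed

lemma Eis_theta: "theta \<in> Eis"
  unfolding theta_omega
  using Eis_add[OF Eis_mult[OF Eis_of_int[of 2] Eis_omega] Eis_of_int[of 1]] by simp

lemma Eis_norm: "z \<in> Eis \<Longrightarrow> z \<noteq> 0 \<Longrightarrow> (cmod z)^2 \<ge> 1"
proof -
  assume "z \<in> Eis" "z \<noteq> 0"
  then obtain a b :: int where z: "z = of_int a + of_int b * omega" unfolding Eis_iff by blast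
  have "(cmod z)^2 = (real_of_int a - real_of_int b/2)^2 + (real_of_int b * sqrt 3/2)^2"
    unfolding z cmod_power2 by (simp add: omega_eq)
  also have "\<dots> = real_of_int (a*a - a*b + b*b)"
    by (simp add: power2_eq_square algebra_simps)
  finally have eq: "(cmod z)^2 = real_of_int (a*a - a*b + b*b)" .
  have ne: "a \<noteq> 0 \<or> b \<noteq> 0" using \<open>z \<noteq> 0\<close> z by auto
  have four: "4*(a*a - a*b + b*b) = (2*a-b)*(2*a-b) + 3*(b*b)" by (simp add: algebra_simps)
  have "a*a - a*b + b*b > 0"
  proof (cases "b = 0")
    case True then have "a \<noteq> 0" using ne by simp
    then show ?thesis using True by (simp add: zero_less_mult_iff, linarith)
  next
    case False
    then have "b*b > 0" by (simp add: zero_less_mult_iff, linarith)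
    moreover have "0 \<le> (2*a-b)*(2*a-b)" by simp
    then have "0 \<le> 4*(a*a) - 4*(a*b) + b*b" by (simp add: algebra_simps)
    ultimately show ?thesis by linarith
  qed
  then have "a*a - a*b + b*b \<ge> 1" by simp
  then show ?thesis unfolding eq by (metis of_int_1 of_int_le_iff)
qed

lemma thetaEis_norm: "e \<in> Eis \<Longrightarrow> theta * e \<noteq> 0 \<Longrightarrow> (cmod (theta * e))^2 \<ge> 3"
proof -
  assume e: "e \<in> Eis" and ne: "theta * e \<noteq> 0"
  then have "e \<noteq> 0" by auto
  then have "(cmod e)^2 \<ge> 1" using Eis_norm e by blast
  moreover have "(cmod (theta * e))^2 = 3 * (cmod e)^2"
    by (simp add: norm_mult power_mult_distrib cmod_theta_sq)
  ultimately show ?thesis by simp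
qed

lemma arcosh_cmp: "1 \<le> x \<Longrightarrow> x < 4/3 \<Longrightarrow> 2 * arcosh (sqrt x) < 2 * arcosh (sqrt (4/3))"
  by (simp add: real_le_rsqrt)

lemma arcosh_cmp2: "4/3 \<le> x \<Longrightarrow> 2 * arcosh (sqrt (4/3)) \<le> 2 * arcosh (sqrt x)"
proof -
  assume "4/3 \<le> x"
  moreover have "1 \<le> sqrt (4/3::real)" by (simp add: real_le_rsqrt)
  moreover have "sqrt (4/3) \<le> sqrt x" using \<open>4/3 \<le> x\<close> by simp
  ultimately show ?thesis
    using arcosh_less_iff_real[of "sqrt x" "sqrt (4/3)"] by linarith
qed

lemma r0_pos: "0 < 2 * arcosh (sqrt (4/3::real))"
proof -
  have "1 \<le> sqrt (4/3::real)" by (simp add: real_le_rsqrt)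
  moreover have "sqrt (4/3::real) \<noteq> 1" by simp
  ultimately show ?thesis by simp
qed

context
  fixes lam9 :: cvec12
  assumes l9: "hf12 lam9 lam9 = 9"
begin

lemma hsc: "hf12 (a *s lam9) (b *s lam9) = 9 * a * cnj b"
  by (simp add: hf12_simps l9)

definition "u1 = ((-3/4) *s lam9, - theta, 3/2 :: complex)"
definition "v1 = ((-3/4) *s lam9, Complex (3/4) (-3* sqrt 3/4), Complex (9/4) (-sqrt 3/4))"
definition "u2 = ((-3/4) *s lam9, - theta, 5/4 :: complex)"
definition "v2 = ((-3/4) *s lam9, Complex (5/8) (-5* sqrt 3/8), Complex (17/8) (-sqrt 3/8))"
definition "pvec = (- lam9, - theta, 2 :: complex)"
definition "ll = (0 :: cvec12, -1 :: complex, omega)"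

lemma u1_n: "hform u1 u1 = -63/16"
  by (simp add: u1_def hf12_simps l9 theta_eq complex_eq_iff)
lemmas cs = hf12_simps l9 theta_eq omega_eq complex_eq_iff rho_def

lemma u1_r: "(cmod (hform rho u1))^2 = 9"
  unfolding cmod_power2 by (simp add: u1_def cs power2_eq_square)
lemma v1_n: "hform v1 v1 = -63/16"
  by (simp add: v1_def cs algebra_simps)
lemma v1_r: "(cmod (hform rho v1))^2 = 27/4"
  unfolding cmod_power2 by (simp add: v1_def cs power2_eq_square algebra_simps)
lemma u1_p: "(cmod (hform u1 pvec))^2 = 225/16"
  unfolding cmod_power2 by (simp add: u1_def pvec_def cs power2_eq_square algebra_simps)
lemma v1_t: "triflection omega ll v1 = u1"
  by (simp add: triflection_def v1_def u1_def ll_def cs algebra_simps)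
lemma u2_n: "hform u2 u2 = -39/16"
  by (simp add: u2_def cs algebra_simps)
lemma u2_p: "(cmod (hform u2 pvec))^2 = 9"
  unfolding cmod_power2 by (simp add: u2_def pvec_def cs power2_eq_square algebra_simps)
lemma u2_s: "hform u2 (lam9, theta, -1) = 0"
  by (simp add: u2_def cs algebra_simps)
lemma v2_n: "hform v2 v2 = -39/16"
  by (simp add: v2_def cs algebra_simps)
lemma v2_r: "(cmod (hform rho v2))^2 = 75/16"
  unfolding cmod_power2 by (simp add: v2_def cs power2_eq_square algebra_simps)
lemma v2_t: "triflection omega ll v2 = u2"
  by (simp add: triflection_def v2_def u2_def ll_def cs algebra_simps)
lemma pvec_n: "hform pvec pvec = -3"
  by (simp add: pvec_def cs algebra_simps)
lemma pvec_r: "(cmod (hform rho pvec))^2 = 9"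
  unfolding cmod_power2 by (simp add: pvec_def cs power2_eq_square algebra_simps)
lemma ll_n: "hform ll ll = 3"
  by (simp add: ll_def cs algebra_simps)
lemma ll_r: "(cmod (hform rho ll))^2 = 3"
  unfolding cmod_power2 by (simp add: ll_def cs power2_eq_square algebra_simps)
lemma rho_s: "hform rho (lam9, theta, -1) = 3"
  by (simp add: cs algebra_simps)

end

theorem lemma5p4:
  fixes \<Lambda> :: "cvec12 set" and lam9 :: cvec12
  assumes "complex_leech \<Lambda>"
    and "lam9 \<in> \<Lambda>" and "hf12 lam9 lam9 = 9"
  defines "s \<equiv> (lam9, theta, -1) :: vec"
  defines "p \<equiv> vsub rho (vscale (hform rho s / 3) s)"
  defines "B \<equiv> {w. negv w \<and> ht w < ht p}"
  shows "\<exists>r>0. chball p r \<inter> Hall \<Lambda> = chball p r \<inter> Hat \<Lambda> p \<and>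
           (\<exists>l \<zeta>. leech_root \<Lambda> l \<and> \<zeta> \<in> {omega, cnj omega} \<and>
              B \<inter> triflection \<zeta> l ` B \<inter> chball p r \<noteq> {} \<and>
              triflection \<zeta> l ` B \<inter> chball p r \<inter> mirror s \<noteq> {})"
proof -
  note l9 = assms(3)
  have Lam0: "0 \<in> \<Lambda>"
  proof -
    from assms(1) obtain b :: "12 \<Rightarrow> cvec12" where
      M: "\<Lambda> = {(\<Sum>i\<in>UNIV. c i *s b i) | c. \<forall>i. c i \<in> Eis}"
      unfolding complex_leech_def E_lattice12_def by blast
    have z: "(0::complex) \<in> Eis" using Eis_of_int[of 0] by simp
    have "(\<Sum>i\<in>UNIV. (\<lambda>_. 0::complex) i *s b i) \<in> {(\<Sum>i\<in>UNIV. c i *s b i) | c. \<forall>i. c i \<in> Eis}"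
      using z by (intro CollectI exI[of _ "\<lambda>_. 0"]) simp
    then show ?thesis unfolding M by simp
  qed
  have inner: "\<forall>x\<in>\<Lambda>. \<forall>y\<in>\<Lambda>. hf12 x y \<in> {theta * e | e. e \<in> Eis}"
    using assms(1) unfolding complex_leech_def by blast
  have p_eq: "p = pvec lam9"
    using rho_s[OF l9] by (simp add: p_def s_def pvec_def[OF l9] rho_def)
  have p_n: "hform p p = -3" using pvec_n[OF l9] p_eq by simp
  have negp: "negv p" using p_n by (simp add: negv_def)
  have htp: "ht p = 3" using pvec_r[OF l9] p_n p_eq by (simp add: ht_def)
  define r0 where "r0 = 2 * arcosh (sqrt (4/3::real))"
  have r0pos: "r0 > 0" unfolding r0_def by (rule r0_pos)
  have key: "hform p r = 0" if wn: "negv w" and rr: "r \<in> roots \<Lambda>" and wr: "hform w r = 0"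
    and wd: "chdist w p < r0" for w r
  proof (rule ccontr)
    assume ne: "hform p r \<noteq> 0"
    obtain x y z where r: "r = (x, y, z)" and x: "x \<in> \<Lambda>" and y: "y \<in> Eis" and z: "z \<in> Eis"
      and r3: "hform r r = 3"
      using rr unfolding roots_def Lat_def by blast
    obtain e where e: "e \<in> Eis" and he: "hf12 lam9 x = theta * e"
      using inner assms(2) x by blast
    have pr: "hform p r = theta * (- e + theta * cnj z + 2 * cnj y)"
      unfolding p_eq pvec_def[OF l9] r by (simp add: hf12_simps he cnj_theta algebra_simps)
    have EE: "- e + theta * cnj z + 2 * cnj y \<in> Eis"
      using e y z Eis_add Eis_minus Eis_mult Eis_cnj Eis_theta Eis_of_int[of 2]
      by (metis of_int_numeral)
    have pr3: "(cmod (hform p r))^2 \<ge> 3"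
      unfolding pr by (rule thetaEis_norm[OF EE]) (use ne pr in simp)
    have wneg: "Re (hform w w) < 0" using wn by (simp add: negv_def)
    have mf: "3 * (cmod (hform p w))^2 \<ge> - Re (hform w w) * (9 + (cmod (hform p r))^2)"
      by (rule mirror_far[OF wneg wr r3 p_n])
    have "- Re (hform w w) * (9 + (cmod (hform p r))^2) \<ge> - Re (hform w w) * 12"
      using pr3 wneg by (intro mult_left_mono) auto
    with mf have big: "(cmod (hform p w))^2 \<ge> - 4 * Re (hform w w)" by linarith
    have cm: "cmod (hform w p) = cmod (hform p w)" using hform_cnj[of w p] by simp
    define X where "X = (cmod (hform w p))^2 / (Re (hform w w) * Re (hform p p))"
    have "X = (cmod (hform p w))^2 / (-3 * Re (hform w w))"
      unfolding X_def cm p_n by (simp add: mult.commute)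
    moreover have D: "-3 * Re (hform w w) > 0" using wneg by simp
    moreover have "4/3 * (-3 * Re (hform w w)) \<le> (cmod (hform p w))^2" using big by linarith
    ultimately have "X \<ge> 4/3" using pos_le_divide_eq[OF D] by simp
    then have "r0 \<le> chdist w p" unfolding r0_def chdist_def X_def[symmetric]
      by (rule arcosh_cmp2)
    with wd show False by simp
  qed
  have part1: "chball p r0 \<inter> Hall \<Lambda> = chball p r0 \<inter> Hat \<Lambda> p"
  proof (intro equalityI subsetI)
    fix w assume w: "w \<in> chball p r0 \<inter> Hall \<Lambda>"
    then obtain r where r: "r \<in> roots \<Lambda>" and wm: "w \<in> mirror r"
      unfolding Hall_def by blast
    have "hform p r = 0"
      using key[of w r] w r wm unfolding chball_def mirror_def by blast
    then have "p \<in> mirror r" using negp unfolding mirror_def by simp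
    then show "w \<in> chball p r0 \<inter> Hat \<Lambda> p" using w r wm unfolding Hat_def by blast
  next
    fix w assume "w \<in> chball p r0 \<inter> Hat \<Lambda> p"
    then show "w \<in> chball p r0 \<inter> Hall \<Lambda>" unfolding Hat_def Hall_def by blast
  qed
  have lr: "leech_root \<Lambda> (ll)"
  proof -
    have "ll \<in> Lat \<Lambda>"
      unfolding ll_def[OF l9] Lat_def using Lam0 Eis_omega Eis_of_int[of "-1"] by auto
    then show ?thesis using ll_n[OF l9] ll_r[OF l9]
      unfolding leech_root_def roots_def by simp
  qed
  have pd: "chdist u p = 2 * arcosh (sqrt ((cmod (hform u (pvec lam9)))^2 / (Re (hform u u) * (-3))))"
    for u unfolding chdist_def p_eq[symmetric] using p_n by simp
  have v1B: "v1 lam9 \<in> B" unfolding B_def htp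
    using v1_n[OF l9] v1_r[OF l9] by (simp add: negv_def ht_def)
  have u1B: "u1 lam9 \<in> B" unfolding B_def htp
    using u1_n[OF l9] u1_r[OF l9] by (simp add: negv_def ht_def)
  have u1C: "u1 lam9 \<in> chball p r0"
  proof -
    have "chdist (u1 lam9) p = 2 * arcosh (sqrt (25/21))"
      unfolding pd u1_n[OF l9] u1_p[OF l9] by simp
    also have "\<dots> < r0" unfolding r0_def by (rule arcosh_cmp) auto
    finally show ?thesis using u1_n[OF l9] unfolding chball_def negv_def by simp
  qed
  have v2B: "v2 lam9 \<in> B" unfolding B_def htp
    using v2_n[OF l9] v2_r[OF l9] by (simp add: negv_def ht_def)
  have u2C: "u2 lam9 \<in> chball p r0"
  proof -
    have "chdist (u2 lam9) p = 2 * arcosh (sqrt (16/13))"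
      unfolding pd u2_n[OF l9] u2_p[OF l9] by simp
    also have "\<dots> < r0" unfolding r0_def by (rule arcosh_cmp) auto
    finally show ?thesis using u2_n[OF l9] unfolding chball_def negv_def by simp
  qed
  have u2M: "u2 lam9 \<in> mirror s"
    using u2_s[OF l9] u2_n[OF l9] unfolding mirror_def negv_def s_def by simp
  have i1: "u1 lam9 \<in> triflection omega (ll) ` B"
    using v1_t[OF l9] v1B by (metis image_eqI)
  have i2: "u2 lam9 \<in> triflection omega (ll) ` B"
    using v2_t[OF l9] v2B by (metis image_eqI)
  show ?thesis
    apply (rule exI[of _ r0])
    apply (intro conjI r0pos part1)
    apply (rule exI[of _ "ll"], rule exI[of _ omega])
    using lr i1 i2 u1B u1C u2C u2M by blast
qed

end
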